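(* (i) Let $a\in(0,1/2]$. For any $\rho,\rho'\in(0,1)$ with $\rho\ge a\rho'$, $$Q(\rho,\rho')\le\frac{5}{3a}K(\rho,\rho').$$ By contrast, for any constant $a>0$, $\sup\{Q(\rho,\rho')/L(\rho,\rho'):\rho,\rho'\in(0,1),\ \rho\ge a\rho'\}=\infty$. (ii) Consequently, if for a fixed $\gamma$ one has $\pi(X;\gamma)\ge a\,\pi^*(X)$ almost surely for some $a\in(0,1/2]$, then $$E\big[Q\{\pi(X;\gamma),\pi^*(X)\}\big]\le\frac{5}{3a}E\big[K\{\pi(X;\gamma),\pi^*(X)\}\big].$$
   Context: For $\rho,\rho'\in(0,1)$: $Q(\rho,\rho')=(\rho'/\rho-1)^2$, $K(\rho,\rho')=\rho'/\rho-1-\log(\rho'/\rho)$, $L(\rho,\rho')=\rho'\log(\rho/\rho')+(1-\rho')\log\{(1-\rho)/(1-\rho')\}$. In (ii), $\pi^*(X)=P(T=1\mid X)\in(0,1)$ and $\pi(X;\gamma)=\{1+e^{-\gamma^\top f(X)}\}^{-1}$. *)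

theory Defs
  imports "HOL-Probability.Probability"
begin

definition Qf :: "real \<Rightarrow> real \<Rightarrow> real" where
  "Qf \<rho> \<rho>' = (\<rho>' / \<rho> - 1)\<^sup>2"

definition Kf :: "real \<Rightarrow> real \<Rightarrow> real" where
  "Kf \<rho> \<rho>' = \<rho>' / \<rho> - 1 - ln (\<rho>' / \<rho>)"

definition Lf :: "real \<Rightarrow> real \<Rightarrow> real" where
  "Lf \<rho> \<rho>' = \<rho>' * ln (\<rho> / \<rho>') + (1 - \<rho>') * ln ((1 - \<rho>) / (1 - \<rho>'))"

definition logistic_pi :: "('b \<Rightarrow> 'v::euclidean_space) \<Rightarrow> 'v \<Rightarrow> 'b \<Rightarrow> real" where
  "logistic_pi f \<gamma> x = 1 / (1 + exp (- (\<gamma> \<bullet> f x)))"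

end

theory Submission imports Defs begin

lemma ln2_le: "ln (2::real) \<le> 7/10"
proof -
  have "(1 + (7/10) / real (64::nat)) ^ 64 \<le> exp (7/10::real)"
    by (rule exp_ge_one_plus_x_over_n_power_n) auto
  moreover have "(2::real) \<le> (1 + (7/10) / real (64::nat)) ^ 64" by (simp add: power_divide)
  ultimately have "2 \<le> exp (7/10::real)" by linarith
  then show ?thesis by (metis ln_exp ln_le_cancel_iff exp_gt_zero zero_less_numeral)
qed

lemma L1: assumes "0 < t" "t \<le> (1::real)" shows "ln t \<le> t - 1 - (t-1)^2/2"
proof -
  let ?H = "\<lambda>t::real. t - 1 - (t-1)^2/2 - ln t"
  have "?H t \<ge> ?H 1"
  proof (rule DERIV_nonpos_imp_decreasing_open[OF assms(2)])
    fix x assume x: "t < x" "x < 1"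
    have "(?H has_real_derivative (1 - (x-1) - 1/x)) (at x)"
      using x assms by (auto intro!: derivative_eq_intros simp: power2_eq_square field_simps)
    moreover have "1 - (x-1) - 1/x \<le> 0"
    proof -
      have "1 - (x-1) - 1/x = -((x-1)^2)/x" using x assms by (simp add: field_simps power2_eq_square)
      also have "\<dots> \<le> 0" using x assms by simp
      finally show ?thesis .
    qed
    ultimately show "\<exists>y. (?H has_real_derivative y) (at x) \<and> y \<le> 0" by blast
  next
    show "continuous_on {t..1} ?H" using assms by (auto intro!: continuous_intros)
  qed
  then show ?thesis by simp
qed

lemma L2: assumes "1 \<le> t" "t \<le> (2::real)" shows "ln t \<le> t - 1 - 3/10*(t-1)^2"
proof -
  let ?H = "\<lambda>t::real. t - 1 - 3/10*(t-1)^2 - ln t"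
  have D: "(?H has_real_derivative ((x-1)*(1 - 6/10*x)/x)) (at x)" if "x > 0" for x
  proof -
    have "(?H has_real_derivative (1 - 3/10*(2*(x-1)) - 1/x)) (at x)"
      using that by (auto intro!: derivative_eq_intros)
    moreover have "1 - 3/10*(2*(x-1)) - 1/x = (x-1)*(1 - 6/10*x)/x" using that by (simp add: field_simps)
    ultimately show ?thesis by simp
  qed
  show ?thesis
  proof (cases "t \<le> 5/3")
    case True
    have "?H 1 \<le> ?H t"
    proof (rule DERIV_nonneg_imp_increasing_open[OF assms(1)])
      fix x assume x: "1 < x" "x < t"
      have "(x-1)*(1 - 6/10*x)/x \<ge> 0" using x True by (intro divide_nonneg_pos mult_nonneg_nonneg) auto
      then show "\<exists>y. (?H has_real_derivative y) (at x) \<and> y \<ge> 0" using D[of x] x by auto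
    next
      show "continuous_on {1..t} ?H" using assms by (auto intro!: continuous_intros)
    qed
    then show ?thesis by simp
  next
    case False
    have "?H 2 \<le> ?H t"
    proof (rule DERIV_nonpos_imp_decreasing_open[OF assms(2)])
      fix x assume x: "t < x" "x < 2"
      have "(x-1)*(1 - 6/10*x)/x \<le> 0" using x False
        by (intro divide_nonpos_pos mult_nonneg_nonpos) auto
      then show "\<exists>y. (?H has_real_derivative y) (at x) \<and> y \<le> 0" using D[of x] x False by auto
    next
      show "continuous_on {t..2} ?H" using assms by (auto intro!: continuous_intros)
    qed
    then show ?thesis using ln2_le by simp
  qed
qed

lemma L3: fixes t :: real assumes "2 \<le> t" shows "ln t \<le> (t-1) - 3*(t-1)^2/(5*t)"
proof -
  let ?H = "\<lambda>t::real. (t-1) - 3*(t-1)^2/(5*t) - ln t"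
  have "?H 2 \<le> ?H t"
  proof (rule DERIV_nonneg_imp_increasing_open[OF assms])
    fix x assume x: "2 < x" "x < t"
    have "(?H has_real_derivative (2/5 + 3/(5*x^2) - 1/x)) (at x)"
      using x by (auto intro!: derivative_eq_intros simp: power2_eq_square field_simps)
    moreover have "2/5 + 3/(5*x^2) - 1/x = (2*x-3)*(x-1)/(5*x^2)" using x by (simp add: field_simps power2_eq_square)
    moreover have "(2*x-3)*(x-1)/(5*x^2) \<ge> 0" using x by (intro divide_nonneg_pos mult_nonneg_nonneg) auto
    ultimately show "\<exists>y. (?H has_real_derivative y) (at x) \<and> y \<ge> 0" by auto
  next
    show "continuous_on {2..t} ?H" using assms by (auto intro!: continuous_intros)
  qed
  then show ?thesis using ln2_le by simp
qed


lemma QK: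
  fixes a r r' :: real
  assumes a: "0 < a" "a \<le> 1/2" and r: "0 < r" "r < 1" and r': "0 < r'" "r' < 1" and ar: "r \<ge> a * r'"
  shows "Qf r r' \<le> 5 / (3 * a) * Kf r r'"
proof -
  define t where "t = r' / r"
  have t0: "0 < t" using r r' by (simp add: t_def)
  have ta: "t \<le> 1/a" using ar a r by (simp add: t_def field_simps)
  have Q: "Qf r r' = (t-1)^2" by (simp add: Qf_def t_def)
  have K: "Kf r r' = t - 1 - ln t" by (simp add: Kf_def t_def)
  have g0: "0 \<le> t - 1 - ln t" using ln_le_minus_one[OF t0] by simp
  have c1: "2 \<le> 5/(3*a)" and c2: "10/3 \<le> 5/(3*a)" using a by (simp_all add: field_simps)
  have "(t-1)^2 \<le> 5/(3*a) * (t - 1 - ln t)"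
  proof (cases "t \<le> 1")
    case True
    have "(t-1)^2 \<le> 2 * (t - 1 - ln t)" using L1[OF t0 True] by simp
    also have "\<dots> \<le> 5/(3*a) * (t - 1 - ln t)" using c1 g0 by (rule mult_right_mono)
    finally show ?thesis .
  next
    case False
    show ?thesis
    proof (cases "t \<le> 2")
      case True
      have "(t-1)^2 \<le> 10/3 * (t - 1 - ln t)" using L2[of t] True False by simp
      also have "\<dots> \<le> 5/(3*a) * (t - 1 - ln t)" using c2 g0 by (rule mult_right_mono)
      finally show ?thesis .
    next
      case F2: False
      have l3: "ln t \<le> (t-1) - 3*(t-1)^2/(5*t)" using L3[of t] F2 by simp
      have "(t-1)^2 \<le> 5*t/3 * (t - 1 - ln t)"
      proof -
        have "3*(t-1)^2/(5*t) \<le> t - 1 - ln t" using l3 by simp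
        then show ?thesis using t0 by (simp add: field_simps)
      qed
      also have "\<dots> \<le> 5/(3*a) * (t - 1 - ln t)"
        using ta a g0 by (intro mult_right_mono) (simp_all add: field_simps)
      finally show ?thesis .
    qed
  qed
  then show ?thesis using Q K by simp
qed

lemma ln_ge_1_minus_inv: assumes "0 < (y::real)" shows "1 - 1/y \<le> ln y"
proof -
  have "ln (1/y) \<le> 1/y - 1" using assms by (intro ln_le_minus_one) simp
  then show ?thesis using assms by (simp add: ln_div)
qed

lemma unbdd:
  fixes a :: real assumes a: "0 < a"
  shows "\<not> bdd_above {Qf \<rho> \<rho>' / (- Lf \<rho> \<rho>') | \<rho> \<rho>'.
                       \<rho> \<in> {0<..<1} \<and> \<rho>' \<in> {0<..<1} \<and> \<rho> \<ge> a * \<rho>'}" (is "\<not> bdd_above ?S")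
proof
  assume "bdd_above ?S"
  then obtain B where B: "\<And>x. x \<in> ?S \<Longrightarrow> x \<le> B" by (auto simp: bdd_above_def)
  define k where "k = a + 2"
  define r where "r = min (1/2) (1/(8*(\<bar>B\<bar>+1)))"
  define r' where "r' = r / k"
  have k2: "k > 2" using a by (simp add: k_def)
  have r0: "0 < r" and rh: "r \<le> 1/2" and rB: "r \<le> 1/(8*(\<bar>B\<bar>+1))" by (auto simp: r_def)
  have r'0: "0 < r'" and r'r: "r' < r" using r0 k2 by (auto simp: r'_def field_simps)
  have ar: "r \<ge> a * r'" using r0 k2 a by (simp add: r'_def k_def field_simps)
  have lnk: "ln k < k - 1"
  proof -
    have "ln k = ln 2 + ln (k/2)" using k2 by (simp add: ln_div)
    also have "ln (k/2) \<le> k/2 - 1" using k2 by (intro ln_le_minus_one) simp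
    finally show ?thesis using ln2_le k2 by simp
  qed
  have lnk0: "0 \<le> ln k" using k2 by simp
  define y where "y = (1 - r') / (1 - r)"
  have y0: "0 < y" using rh r'r r'0 by (simp add: y_def)
  have rr': "r / r' = k" using r0 k2 by (simp add: r'_def)
  have mL: "- Lf r r' = -(r'* ln k) + (1 - r') * ln y"
    using rh r'r r'0 r0 by (simp add: Lf_def rr' y_def ln_div algebra_simps)
  have low: "-Lf r r' \<ge> r' * (k - 1 - ln k)"
  proof -
    have "(1 - r') * (1 - 1/y) \<le> (1 - r') * ln y"
      using ln_ge_1_minus_inv[OF y0] r'r rh by (intro mult_left_mono) auto
    moreover have "(1 - r') * (1 - 1/y) = r - r'" using r'r rh by (simp add: y_def field_simps)
    moreover have "r = r' * k" using k2 by (simp add: r'_def)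
    ultimately show ?thesis using mL by (simp add: algebra_simps)
  qed
  have pos: "-Lf r r' > 0"
  proof -
    have "0 < r' * (k - 1 - ln k)" using lnk r'0 by simp
    then show ?thesis using low by linarith
  qed
  have up: "-Lf r r' \<le> 2 * r"
  proof -
    have "(1 - r') * ln y \<le> (1 - r') * (y - 1)"
      using ln_le_minus_one[OF y0] r'r rh by (intro mult_left_mono) auto
    moreover have "(1 - r') * (y - 1) = (1 - r') * (r - r') / (1 - r)" using rh by (simp add: y_def field_simps)
    moreover have "(1 - r') * (r - r') / (1 - r) \<le> 2 * r"
    proof -
      have "(1 - r') * (r - r') \<le> 1 * (r - r')" using r'0 r'r rh by (intro mult_right_mono) auto
      then have "(1 - r') * (r - r') \<le> r" using r'0 by simp
      also have "r \<le> 2 * r * (1 - r)" using mult_left_mono[of 1 "2*(1-r)" r] rh r0 by (simp add: algebra_simps)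
      finally show ?thesis using rh by (simp add: field_simps)
    qed
    moreover have "0 \<le> r' * ln k" using r'0 lnk0 by simp
    ultimately show ?thesis using mL by linarith
  qed
  have Q: "Qf r r' \<ge> 1/4"
  proof -
    have "r' / r = 1/k" using r0 by (simp add: r'_def)
    then have "Qf r r' = (1 - 1/k)^2" by (simp add: Qf_def power2_commute)
    moreover have h: "1/2 \<le> 1 - 1/k" using k2 by (simp add: field_simps)
    moreover have "(1/2::real)^2 \<le> (1 - 1/k)^2" using h by (intro power_mono) auto
    ultimately show ?thesis by (simp add: power2_eq_square)
  qed
  have "Qf r r' / (- Lf r r') \<ge> (1/4) / (2 * r)"
    using Q up pos by (intro frac_le) auto
  moreover have "(1/4) / (2 * r) \<ge> \<bar>B\<bar> + 1"
    using rB r0 by (simp add: field_simps)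
  moreover have "Qf r r' / (- Lf r r') \<in> ?S"
    using r0 rh r'0 r'r ar by (intro CollectI exI[of _ r] exI[of _ r']) simp
  ultimately show False using B[of "Qf r r' / (- Lf r r')"] by linarith
qed


lemma part3:
  fixes M :: "'a measure" and N :: "'b measure" and X :: "'a \<Rightarrow> 'b" and pistar :: "'b \<Rightarrow> real"
    and f :: "'b \<Rightarrow> 'v::euclidean_space" and \<gamma> :: 'v and a :: real
  assumes "prob_space M" "X \<in> measurable M N" "pistar \<in> borel_measurable N"
        "f \<in> borel_measurable N" "\<forall>x \<in> space N. 0 < pistar x \<and> pistar x < 1"
        "0 < a" "a \<le> 1/2"
        "AE \<omega> in M. logistic_pi f \<gamma> (X \<omega>) \<ge> a * pistar (X \<omega>)"
  shows "(\<integral>\<^sup>+ \<omega>. ennreal (Qf (logistic_pi f \<gamma> (X \<omega>)) (pistar (X \<omega>))) \<partial>M)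
            \<le> ennreal (5 / (3 * a)) * (\<integral>\<^sup>+ \<omega>. ennreal (Kf (logistic_pi f \<gamma> (X \<omega>)) (pistar (X \<omega>))) \<partial>M)"
proof -
  have lm: "logistic_pi f \<gamma> \<in> borel_measurable N"
    unfolding logistic_pi_def using assms(4) by measurable
  have km: "(\<lambda>x. Kf (logistic_pi f \<gamma> x) (pistar x)) \<in> borel_measurable N"
    unfolding Kf_def using lm assms(3) by measurable
  have km2: "(\<lambda>\<omega>. ennreal (Kf (logistic_pi f \<gamma> (X \<omega>)) (pistar (X \<omega>)))) \<in> borel_measurable M"
    using measurable_compose[OF assms(2) km] by measurable
  have lp: "0 < logistic_pi f \<gamma> x \<and> logistic_pi f \<gamma> x < 1" for x
  proof -
    have "0 < exp (- (\<gamma> \<bullet> f x))" by simp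
    then have p: "0 < 1 + exp (- (\<gamma> \<bullet> f x))" and q: "1 < 1 + exp (- (\<gamma> \<bullet> f x))" by linarith+
    have "1 / (1 + exp (- (\<gamma> \<bullet> f x))) < 1" using divide_less_eq_1_pos[OF p, of 1] q by blast
    then show ?thesis using p unfolding logistic_pi_def by simp
  qed
  have "(\<integral>\<^sup>+ \<omega>. ennreal (Qf (logistic_pi f \<gamma> (X \<omega>)) (pistar (X \<omega>))) \<partial>M)
      \<le> (\<integral>\<^sup>+ \<omega>. ennreal (5 / (3 * a)) * ennreal (Kf (logistic_pi f \<gamma> (X \<omega>)) (pistar (X \<omega>))) \<partial>M)"
  proof (rule nn_integral_mono_AE)
    show "AE \<omega> in M. ennreal (Qf (logistic_pi f \<gamma> (X \<omega>)) (pistar (X \<omega>)))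
        \<le> ennreal (5 / (3 * a)) * ennreal (Kf (logistic_pi f \<gamma> (X \<omega>)) (pistar (X \<omega>)))"
      using assms(8) AE_space
    proof eventually_elim
      case (elim \<omega>)
      have Xs: "X \<omega> \<in> space N" using elim measurable_space[OF assms(2)] by blast
      have "Qf (logistic_pi f \<gamma> (X \<omega>)) (pistar (X \<omega>)) \<le> 5 / (3 * a) * Kf (logistic_pi f \<gamma> (X \<omega>)) (pistar (X \<omega>))"
        using QK[of a "logistic_pi f \<gamma> (X \<omega>)" "pistar (X \<omega>)"] assms(5-7) Xs lp elim by auto
      then have "ennreal (Qf (logistic_pi f \<gamma> (X \<omega>)) (pistar (X \<omega>))) \<le> ennreal (5 / (3 * a) * Kf (logistic_pi f \<gamma> (X \<omega>)) (pistar (X \<omega>)))"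
        by (rule ennreal_leI)
      also have "\<dots> = ennreal (5 / (3 * a)) * ennreal (Kf (logistic_pi f \<gamma> (X \<omega>)) (pistar (X \<omega>)))"
        using assms(6) by (intro ennreal_mult') auto
      finally show ?case .
    qed
  qed
  also have "\<dots> = ennreal (5 / (3 * a)) * (\<integral>\<^sup>+ \<omega>. ennreal (Kf (logistic_pi f \<gamma> (X \<omega>)) (pistar (X \<omega>))) \<partial>M)"
    by (rule nn_integral_cmult[OF km2])
  finally show ?thesis .
qed

theorem proposition4:
  shows
   "(\<forall>a::real. 0 < a \<and> a \<le> 1/2 \<longrightarrow>
       (\<forall>\<rho> \<rho>'. \<rho> \<in> {0<..<1} \<and> \<rho>' \<in> {0<..<1} \<and> \<rho> \<ge> a * \<rho>' \<longrightarrow>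
          Qf \<rho> \<rho>' \<le> 5 / (3 * a) * Kf \<rho> \<rho>'))
    \<and> (\<forall>a::real. 0 < a \<longrightarrow>
       \<not> bdd_above {Qf \<rho> \<rho>' / (- Lf \<rho> \<rho>') | \<rho> \<rho>'.
                       \<rho> \<in> {0<..<1} \<and> \<rho>' \<in> {0<..<1} \<and> \<rho> \<ge> a * \<rho>'})
    \<and> (\<forall>(M::'a measure) (N::'b measure) (X::'a \<Rightarrow> 'b) (pistar::'b \<Rightarrow> real)
          (f::'b \<Rightarrow> 'v::euclidean_space) (\<gamma>::'v) (a::real).
        prob_space M \<and> X \<in> measurable M N \<and> pistar \<in> borel_measurable N
        \<and> f \<in> borel_measurable N \<and> (\<forall>x \<in> space N. 0 < pistar x \<and> pistar x < 1)
        \<and> 0 < a \<and> a \<le> 1/2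
        \<and> (AE \<omega> in M. logistic_pi f \<gamma> (X \<omega>) \<ge> a * pistar (X \<omega>))
        \<longrightarrow> (\<integral>\<^sup>+ \<omega>. ennreal (Qf (logistic_pi f \<gamma> (X \<omega>)) (pistar (X \<omega>))) \<partial>M)
            \<le> ennreal (5 / (3 * a)) * (\<integral>\<^sup>+ \<omega>. ennreal (Kf (logistic_pi f \<gamma> (X \<omega>)) (pistar (X \<omega>))) \<partial>M))"
proof (intro conjI)
  show "\<forall>a::real. 0 < a \<and> a \<le> 1/2 \<longrightarrow>
       (\<forall>\<rho> \<rho>'. \<rho> \<in> {0<..<1} \<and> \<rho>' \<in> {0<..<1} \<and> \<rho> \<ge> a * \<rho>' \<longrightarrow>
          Qf \<rho> \<rho>' \<le> 5 / (3 * a) * Kf \<rho> \<rho>')"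
    using QK by auto
  show "\<forall>a::real. 0 < a \<longrightarrow>
       \<not> bdd_above {Qf \<rho> \<rho>' / (- Lf \<rho> \<rho>') | \<rho> \<rho>'.
                       \<rho> \<in> {0<..<1} \<and> \<rho>' \<in> {0<..<1} \<and> \<rho> \<ge> a * \<rho>'}"
    using unbdd by blast
qed (intro allI impI, elim conjE, rule part3, assumption+)

end
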